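(* Let $n\ge3$ and let $C_n$ be the cycle on $n$ vertices. There exist pairs of vertices $\{a,b\}\neq\{c,d\}$ of $C_n$, at least one of which is an edge, such that there is perfect plus state transfer between $e_a+e_b$ and $e_c+e_d$ in $C_n$, if and only if $n=4$.
   Context: For a graph with adjacency matrix $A$ and degree matrix $\Delta$, the unsigned Laplacian is $L_+=\Delta+A$. Perfect plus state transfer between $e_a+e_b$ and $e_c+e_d$ means $\exp(itL_+)(e_a+e_b)=\gamma(e_c+e_d)$ for some $t\ge0$ and $\gamma\in\mathbb{C}$, $|\gamma|=1$, where $e_v$ is the standard basis vector of $v$. *)

theory Defs
  imports Complex_Main
begin

text \<open>Graphs on the vertex set {0..<n}; matrices and vectors are functions on indices,
  only entries with indices < n are meaningful.\<close>

definition cycle_adj :: "nat \<Rightarrow> nat \<Rightarrow> nat \<Rightarrow> bool" where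
  "cycle_adj n u v \<longleftrightarrow> u < n \<and> v < n \<and> (v = (u + 1) mod n \<or> u = (v + 1) mod n)"

definition degree :: "nat \<Rightarrow> (nat \<Rightarrow> nat \<Rightarrow> bool) \<Rightarrow> nat \<Rightarrow> nat" where
  "degree n adj u = card {v. v < n \<and> adj u v}"

definition signless_laplacian :: "nat \<Rightarrow> (nat \<Rightarrow> nat \<Rightarrow> bool) \<Rightarrow> nat \<Rightarrow> nat \<Rightarrow> complex" where
  "signless_laplacian n adj u v =
     (if u = v then of_nat (degree n adj u) else 0) + (if adj u v then 1 else 0)"

definition mat_mult :: "nat \<Rightarrow> (nat \<Rightarrow> nat \<Rightarrow> complex) \<Rightarrow> (nat \<Rightarrow> nat \<Rightarrow> complex) \<Rightarrow> nat \<Rightarrow> nat \<Rightarrow> complex" where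
  "mat_mult n A B i j = (\<Sum>k<n. A i k * B k j)"

fun mat_pow :: "nat \<Rightarrow> (nat \<Rightarrow> nat \<Rightarrow> complex) \<Rightarrow> nat \<Rightarrow> nat \<Rightarrow> nat \<Rightarrow> complex" where
  "mat_pow n A 0 = (\<lambda>i j. if i = j then 1 else 0)"
| "mat_pow n A (Suc k) = mat_mult n (mat_pow n A k) A"

definition mat_exp :: "nat \<Rightarrow> (nat \<Rightarrow> nat \<Rightarrow> complex) \<Rightarrow> nat \<Rightarrow> nat \<Rightarrow> complex" where
  "mat_exp n A i j = (\<Sum>k. mat_pow n A k i j / of_nat (fact k))"

definition mat_vec :: "nat \<Rightarrow> (nat \<Rightarrow> nat \<Rightarrow> complex) \<Rightarrow> (nat \<Rightarrow> complex) \<Rightarrow> nat \<Rightarrow> complex" where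
  "mat_vec n A x i = (\<Sum>k<n. A i k * x k)"

definition std_basis :: "nat \<Rightarrow> nat \<Rightarrow> complex" where
  "std_basis a v = (if v = a then 1 else 0)"

definition plus_PST :: "nat \<Rightarrow> (nat \<Rightarrow> nat \<Rightarrow> bool) \<Rightarrow> nat \<Rightarrow> nat \<Rightarrow> nat \<Rightarrow> nat \<Rightarrow> bool" where
  "plus_PST n adj a b c d \<longleftrightarrow>
     (\<exists>t::real. \<exists>\<gamma>::complex. t \<ge> 0 \<and> cmod \<gamma> = 1 \<and>
        (\<forall>v<n. mat_vec n (mat_exp n (\<lambda>i j. \<i> * of_real t * signless_laplacian n adj i j))
                   (\<lambda>w. std_basis a w + std_basis b w) v
               = \<gamma> * (std_basis c v + std_basis d v)))"

end

theory Submission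
  imports Defs
begin

lemma mat_pow_bound:
  assumes "i < n" "j < n"
  shows "norm (mat_pow n A k i j) \<le> (\<Sum>l<n. \<Sum>m<n. norm (A l m)) ^ k"
  using assms(2)
proof (induction k arbitrary: j)
  case 0
  then show ?case by simp
next
  case (Suc k)
  define S where "S = (\<Sum>l<n. \<Sum>m<n. norm (A l m))"
  have S0: "S \<ge> 0" unfolding S_def by (intro sum_nonneg) auto
  have "norm (mat_pow n A (Suc k) i j) = norm (\<Sum>l<n. mat_pow n A k i l * A l j)"
    by (simp add: mat_mult_def)
  also have "\<dots> \<le> (\<Sum>l<n. norm (mat_pow n A k i l) * norm (A l j))"
    by (rule order_trans[OF norm_sum]) (simp add: norm_mult)
  also have "\<dots> \<le> (\<Sum>l<n. S ^ k * norm (A l j))"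
    using Suc.IH unfolding S_def by (intro sum_mono mult_right_mono) auto
  also have "\<dots> = S ^ k * (\<Sum>l<n. norm (A l j))"
    by (simp add: sum_distrib_left)
  also have "\<dots> \<le> S ^ k * S"
  proof (intro mult_left_mono)
    show "(\<Sum>l<n. norm (A l j)) \<le> S" unfolding S_def
      using Suc.prems by (intro sum_mono member_le_sum) auto
  qed (use S0 in auto)
  finally show ?case by (simp add: S_def mult.commute)
qed

lemma mat_pow_summable:
  assumes "i < n" "j < n"
  shows "summable (\<lambda>k. mat_pow n A k i j / of_nat (fact k))"
proof (rule summable_comparison_test)
  define S where "S = (\<Sum>l<n. \<Sum>m<n. norm (A l m))"
  show "summable (\<lambda>k. inverse (fact k) * S ^ k)" by (rule summable_exp)
  show "\<exists>N. \<forall>k\<ge>N. norm (mat_pow n A k i j / of_nat (fact k)) \<le> inverse (fact k) * S ^ k"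
  proof (intro exI allI impI)
    fix k :: nat
    have "norm (mat_pow n A k i j / of_nat (fact k)) = norm (mat_pow n A k i j) / fact k"
      by (simp add: norm_divide)
    also have "\<dots> \<le> S ^ k / fact k"
      using mat_pow_bound[OF assms, of A k] unfolding S_def
      by (intro divide_right_mono) auto
    finally show "norm (mat_pow n A k i j / of_nat (fact k)) \<le> inverse (fact k) * S ^ k"
      by (simp add: field_simps)
  qed
qed

lemma mat_pow_reig:
  assumes "\<forall>v<n. (\<Sum>w<n. M v w * f w) = \<mu> * f v" "v < n"
  shows "(\<Sum>w<n. mat_pow n M k v w * f w) = \<mu> ^ k * f v"
  using assms(2)
proof (induction k arbitrary: v)
  case 0
  have "(\<Sum>w<n. mat_pow n M 0 v w * f w) = (\<Sum>w<n. if v = w then f w else 0)"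
    by (intro sum.cong) auto
  then show ?case using 0 by simp
next
  case (Suc k)
  have "(\<Sum>w<n. mat_pow n M (Suc k) v w * f w) = (\<Sum>w<n. \<Sum>l<n. mat_pow n M k v l * M l w * f w)"
    by (simp add: mat_mult_def sum_distrib_right)
  also have "\<dots> = (\<Sum>l<n. mat_pow n M k v l * (\<Sum>w<n. M l w * f w))"
    by (subst sum.swap) (simp add: sum_distrib_left mult.assoc)
  also have "\<dots> = (\<Sum>l<n. mat_pow n M k v l * (\<mu> * f l))"
    using assms(1) by simp
  also have "\<dots> = \<mu> * (\<Sum>l<n. mat_pow n M k v l * f l)"
    by (simp add: sum_distrib_left algebra_simps)
  also have "\<dots> = \<mu> ^ Suc k * f v" using Suc by simp
  finally show ?case .
qed

lemma mat_pow_leig: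
  assumes "\<forall>w<n. (\<Sum>v<n. f v * M v w) = \<mu> * f w" "w < n"
  shows "(\<Sum>v<n. f v * mat_pow n M k v w) = \<mu> ^ k * f w"
  using assms(2)
proof (induction k arbitrary: w)
  case 0
  have "(\<Sum>v<n. f v * mat_pow n M 0 v w) = (\<Sum>v<n. if v = w then f v else 0)"
    by (intro sum.cong) auto
  then show ?case using 0 by simp
next
  case (Suc k)
  have "(\<Sum>v<n. f v * mat_pow n M (Suc k) v w) = (\<Sum>v<n. \<Sum>l<n. f v * mat_pow n M k v l * M l w)"
    by (simp add: mat_mult_def sum_distrib_left mult.assoc)
  also have "\<dots> = (\<Sum>l<n. (\<Sum>v<n. f v * mat_pow n M k v l) * M l w)"
    by (subst sum.swap) (simp add: sum_distrib_right)
  also have "\<dots> = (\<Sum>l<n. \<mu> ^ k * f l * M l w)"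
    using Suc.IH by simp
  also have "\<dots> = \<mu> ^ k * (\<Sum>l<n. f l * M l w)"
    by (simp add: sum_distrib_left algebra_simps)
  also have "\<dots> = \<mu> ^ Suc k * f w" using assms(1) Suc.prems by simp
  finally show ?case .
qed

lemma exp_sums': "(\<lambda>k. \<mu> ^ k / of_nat (fact k)) sums (exp (\<mu>::complex))"
proof -
  have "(\<lambda>k. \<mu> ^ k /\<^sub>R fact k) sums exp \<mu>" by (rule exp_converges)
  moreover have "\<And>k. \<mu> ^ k /\<^sub>R fact k = \<mu> ^ k / of_nat (fact k)"
    by (simp add: scaleR_conv_of_real divide_inverse mult.commute)
  ultimately show ?thesis by simp
qed

lemma mat_exp_reig:
  assumes "\<forall>v<n. (\<Sum>w<n. M v w * f w) = \<mu> * f v" "v < n"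
  shows "(\<Sum>w<n. mat_exp n M v w * f w) = exp \<mu> * f v"
proof -
  have "(\<lambda>k. \<Sum>w<n. mat_pow n M k v w / of_nat (fact k) * f w) sums (\<Sum>w<n. mat_exp n M v w * f w)"
    unfolding mat_exp_def
    by (intro sums_sum sums_mult2 summable_sums mat_pow_summable assms(2)) auto
  moreover have "(\<lambda>k. \<Sum>w<n. mat_pow n M k v w / of_nat (fact k) * f w) = (\<lambda>k. \<mu> ^ k / of_nat (fact k) * f v)"
  proof
    fix k
    have "(\<Sum>w<n. mat_pow n M k v w / of_nat (fact k) * f w) = (\<Sum>w<n. mat_pow n M k v w * f w) / of_nat (fact k)"
      by (simp add: sum_divide_distrib)
    then show "(\<Sum>w<n. mat_pow n M k v w / of_nat (fact k) * f w) = \<mu> ^ k / of_nat (fact k) * f v"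
      using mat_pow_reig[OF assms, of k] by simp
  qed
  moreover have "(\<lambda>k. \<mu> ^ k / of_nat (fact k) * f v) sums (exp \<mu> * f v)"
    by (intro sums_mult2 exp_sums')
  ultimately show ?thesis using sums_unique2 by metis
qed

lemma mat_exp_leig:
  assumes "\<forall>w<n. (\<Sum>v<n. f v * M v w) = \<mu> * f w" "w < n"
  shows "(\<Sum>v<n. f v * mat_exp n M v w) = exp \<mu> * f w"
proof -
  have "(\<lambda>k. \<Sum>v<n. f v * (mat_pow n M k v w / of_nat (fact k))) sums (\<Sum>v<n. f v * mat_exp n M v w)"
    unfolding mat_exp_def
    by (intro sums_sum sums_mult summable_sums mat_pow_summable assms(2)) auto
  moreover have "(\<lambda>k. \<Sum>v<n. f v * (mat_pow n M k v w / of_nat (fact k))) = (\<lambda>k. \<mu> ^ k / of_nat (fact k) * f w)"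
  proof
    fix k
    have "(\<Sum>v<n. f v * (mat_pow n M k v w / of_nat (fact k))) = (\<Sum>v<n. f v * mat_pow n M k v w) / of_nat (fact k)"
      by (simp add: sum_divide_distrib)
    then show "(\<Sum>v<n. f v * (mat_pow n M k v w / of_nat (fact k))) = \<mu> ^ k / of_nat (fact k) * f w"
      using mat_pow_leig[OF assms, of k] by simp
  qed
  moreover have "(\<lambda>k. \<mu> ^ k / of_nat (fact k) * f w) sums (exp \<mu> * f w)"
    by (intro sums_mult2 exp_sums')
  ultimately show ?thesis using sums_unique2 by metis
qed



lemma cycle_adj_sym: "cycle_adj n u v = cycle_adj n v u"
  unfolding cycle_adj_def by auto

lemma cycle_pred_iff:
  fixes n v w :: nat
  assumes "v < n" "w < n"
  shows "w = (v+1) mod n \<longleftrightarrow> v = (w+n-1) mod n"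
proof
  assume h: "w = (v+1) mod n"
  have "w+n-1 = w + (n-1)" using assms by simp
  then have "(w+n-1) mod n = ((v+1) mod n + (n-1)) mod n" using h by simp
  also have "\<dots> = (v + 1 + (n-1)) mod n" by (simp add: mod_add_left_eq)
  also have "\<dots> = v" using assms by simp
  finally show "v = (w+n-1) mod n" by simp
next
  assume h: "v = (w+n-1) mod n"
  have "(v+1) mod n = ((w+n-1) mod n + 1) mod n" using h by simp
  also have "\<dots> = (w + n - 1 + 1) mod n" by (metis mod_add_left_eq)
  also have "\<dots> = w" using assms by simp
  finally show "w = (v+1) mod n" by simp
qed

lemma cycle_nbrs:
  assumes "w < n"
  shows "{v. v < n \<and> cycle_adj n v w} = {(w+1) mod n, (w+n-1) mod n}"
proof -
  have n0: "n > 0" using assms by simp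
  show ?thesis
    unfolding cycle_adj_def using assms cycle_pred_iff[of _ n w] n0
    by (auto simp: cycle_pred_iff)
qed

lemma cycle_nbrs_distinct:
  fixes n w :: nat
  assumes "n \<ge> 3" "w < n"
  shows "(w+1) mod n \<noteq> (w+n-1) mod n"
proof (cases "w + 1 < n")
  case True
  show ?thesis
  proof (cases "w = 0")
    case True
    then show ?thesis using assms by simp
  next
    case False
    then have "(w+n-1) mod n = w - 1"
      using assms by (metis Nat.add_diff_assoc2 add.commute less_imp_diff_less mod_add_self1 mod_less not_less_eq_eq le_add1 Suc_pred' neq0_conv plus_1_eq_Suc)
    then show ?thesis using True by simp
  qed
next
  case False
  then have w: "w = n - 1" using assms by simp
  have "(w+n-1) mod n = n - 2"
  proof -
    have "w + n - 1 = (n - 2) + n" using w assms by simp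
    then have "(w + n - 1) mod n = ((n - 2) + n) mod n" by simp
    also have "\<dots> = (n - 2) mod n" by (rule mod_add_self2)
    finally show ?thesis using assms by simp
  qed
  moreover have "(w+1) mod n = 0" using w assms by simp
  ultimately show ?thesis using assms by simp
qed

lemma cycle_degree:
  assumes "n \<ge> 3" "w < n"
  shows "degree n (cycle_adj n) w = 2"
proof -
  have "{v. v < n \<and> cycle_adj n w v} = {(w+1) mod n, (w+n-1) mod n}"
    using cycle_nbrs[OF assms(2)] by (simp add: cycle_adj_sym)
  then show ?thesis unfolding degree_def using cycle_nbrs_distinct[OF assms] by simp
qed

lemma pow_mod_root:
  fixes \<omega> :: complex
  assumes "\<omega> ^ n = 1"
  shows "\<omega> ^ (j * (m mod n)) = \<omega> ^ (j * m)"
proof -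
  have e: "j * m = n * (j * (m div n)) + j * (m mod n)"
  proof -
    have "j * m = j * (n * (m div n) + m mod n)" by simp
    also have "\<dots> = n * (j * (m div n)) + j * (m mod n)" by (simp only: distrib_left mult.left_commute)
    finally show ?thesis .
  qed
  have "\<omega> ^ (j * m) = \<omega> ^ (n * (j * (m div n))) * \<omega> ^ (j * (m mod n))"
    by (simp only: e power_add)
  also have "\<omega> ^ (n * (j * (m div n))) = 1"
    by (simp add: power_mult assms)
  finally show ?thesis by simp
qed

lemma cycle_L:
  assumes "n \<ge> 3" "v < n" "w < n"
  shows "signless_laplacian n (cycle_adj n) v w =
    (if v = w then 2 else 0) + (if cycle_adj n v w then 1 else 0)"
  using cycle_degree[OF assms(1,3)] unfolding signless_laplacian_def by simp

lemma cycle_L_sym: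
  assumes "n \<ge> 3" "v < n" "w < n"
  shows "signless_laplacian n (cycle_adj n) v w = signless_laplacian n (cycle_adj n) w v"
  using assms by (simp add: cycle_L cycle_adj_sym)

lemma sum_insert_if_2:
  "a \<noteq> b \<Longrightarrow> sum f {a, b} = f a + f b"
  by simp

lemma cycle_leig:
  fixes \<omega> :: complex
  assumes "n \<ge> 3" "\<omega> ^ n = 1" "w < n"
  shows "(\<Sum>v<n. \<omega>^(j*v) * signless_laplacian n (cycle_adj n) v w)
     = (2 + \<omega>^j + \<omega>^(j*(n-1))) * \<omega>^(j*w)"
proof -
  have "(\<Sum>v<n. \<omega>^(j*v) * signless_laplacian n (cycle_adj n) v w)
      = (\<Sum>v<n. (if v = w then 2 * \<omega>^(j*v) else 0)) + (\<Sum>v<n. if cycle_adj n v w then \<omega>^(j*v) else 0)"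
    unfolding sum.distrib[symmetric]
  proof (rule sum.cong[OF refl])
    fix v assume "v \<in> {..<n}"
    then have "v < n" by simp
    then show "\<omega>^(j*v) * signless_laplacian n (cycle_adj n) v w =
      (if v = w then 2 * \<omega>^(j*v) else 0) + (if cycle_adj n v w then \<omega>^(j*v) else 0)"
      using cycle_L[OF assms(1) _ assms(3), of v] by (simp add: distrib_left)
  qed
  also have "(\<Sum>v<n. (if v = w then 2 * \<omega>^(j*v) else 0)) = 2 * \<omega>^(j*w)"
    using assms(3) by simp
  also have "(\<Sum>v<n. if cycle_adj n v w then \<omega>^(j*v) else 0) = (\<Sum>v\<in>{v. v < n \<and> cycle_adj n v w}. \<omega>^(j*v))"
  proof -
    have "(\<Sum>v<n. if cycle_adj n v w then \<omega>^(j*v) else 0) = (\<Sum>v\<in>{v \<in> {..<n}. cycle_adj n v w}. \<omega>^(j*v))"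
      by (rule sum.inter_filter[symmetric]) simp
    also have "{v \<in> {..<n}. cycle_adj n v w} = {v. v < n \<and> cycle_adj n v w}" by auto
    finally show ?thesis .
  qed
  also have "\<dots> = \<omega>^(j*((w+1) mod n)) + \<omega>^(j*((w+n-1) mod n))"
    unfolding cycle_nbrs[OF assms(3)] using cycle_nbrs_distinct[OF assms(1,3)] by (rule sum_insert_if_2)
  also have "\<omega>^(j*((w+1) mod n)) = \<omega>^(j*w) * \<omega>^j"
  proof -
    have "\<omega>^(j*((w+1) mod n)) = \<omega>^(j*(w+1))" by (rule pow_mod_root[OF assms(2)])
    also have "j*(w+1) = j*w + j" by (simp add: distrib_left)
    finally show ?thesis by (simp only: power_add)
  qed
  also have "\<omega>^(j*((w+n-1) mod n)) = \<omega>^(j*w) * \<omega>^(j*(n-1))"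
  proof -
    have "\<omega>^(j*((w+n-1) mod n)) = \<omega>^(j*(w+n-1))" by (rule pow_mod_root[OF assms(2)])
    also have "j*(w+n-1) = j*w + j*(n-1)" using assms(1) by (simp add: distrib_left[symmetric])
    finally show ?thesis by (simp only: power_add)
  qed
  finally show ?thesis by (simp only: algebra_simps)
qed



fun F :: "int \<Rightarrow> int \<Rightarrow> nat \<Rightarrow> int" where
  "F p d 0 = 2"
| "F p d (Suc 0) = p"
| "F p d (Suc (Suc k)) = p * F p d (Suc k) - d^2 * F p d k"

lemma cos_rec: "cos (real (Suc (Suc k)) * x) = 2 * cos x * cos (real (Suc k) * x) - cos (real k * x)"
proof -
  have a: "cos (real (Suc (Suc k)) * x) = cos (real (Suc k) * x + x)" by (simp add: algebra_simps)
  have b: "cos (real k * x) = cos (real (Suc k) * x - x)" by (simp add: algebra_simps)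
  show ?thesis unfolding a b cos_add cos_diff by simp
qed

lemma F_real:
  assumes "d \<noteq> 0" "2 * cos x = of_int p / of_int d"
  shows "of_int (F p d k) = (of_int d :: real) ^ k * (2 * cos (real k * x))"
proof -
  have p: "(of_int p :: real) = of_int d * (2 * cos x)" using assms by (simp add: field_simps)
  have "of_int (F p d k) = (of_int d :: real) ^ k * (2 * cos (real k * x)) \<and>
        of_int (F p d (Suc k)) = (of_int d :: real) ^ Suc k * (2 * cos (real (Suc k) * x))"
  proof (induction k)
    case 0
    then show ?case using p by simp
  next
    case (Suc k)
    have "of_int (F p d (Suc (Suc k))) = of_int p * of_int (F p d (Suc k)) - (of_int d)^2 * (of_int (F p d k) :: real)"
      by simp
    also have "\<dots> = of_int d * (2 * cos x) * ((of_int d :: real) ^ Suc k * (2 * cos (real (Suc k) * x)))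
        - (of_int d)^2 * ((of_int d :: real) ^ k * (2 * cos (real k * x)))"
      using Suc.IH p by simp
    also have "\<dots> = (of_int d :: real) ^ Suc (Suc k) * (2 * (2 * cos x * cos (real (Suc k) * x) - cos (real k * x)))"
      by (simp add: algebra_simps power2_eq_square)
    also have "\<dots> = (of_int d :: real) ^ Suc (Suc k) * (2 * cos (real (Suc (Suc k)) * x))"
      by (simp only: cos_rec)
    finally show ?case using Suc.IH by simp
  qed
  then show ?thesis by simp
qed

lemma F_mod: "d dvd F p d (Suc k) - p ^ Suc k"
proof -
  have "d dvd F p d (Suc k) - p ^ Suc k \<and> d dvd F p d (Suc (Suc k)) - p ^ Suc (Suc k)"
  proof (induction k)
    case 0
    have "F p d 2 - p^2 = d * (- 2 * d)" by (simp add: numeral_2_eq_2 power2_eq_square algebra_simps)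
    then show ?case by (simp add: numeral_2_eq_2)
  next
    case (Suc k)
    have "F p d (Suc (Suc (Suc k))) - p ^ Suc (Suc (Suc k)) =
      p * (F p d (Suc (Suc k)) - p ^ Suc (Suc k)) - d * (d * F p d (Suc k))"
      by (simp add: algebra_simps power2_eq_square)
    moreover have "d dvd p * (F p d (Suc (Suc k)) - p ^ Suc (Suc k)) - d * (d * F p d (Suc k))"
    proof (rule dvd_diff)
      show "d dvd p * (F p d (Suc (Suc k)) - p ^ Suc (Suc k))"
        by (rule dvd_mult) (use Suc.IH in blast)
    qed simp
    ultimately show ?case using Suc.IH by simp
  qed
  then show ?thesis by simp
qed

lemma two_cos_int:
  assumes n: "n \<ge> 1" and q: "2 * cos (2*pi/real n) \<in> \<rat>"
  shows "\<exists>z::int. 2 * cos (2*pi/real n) = of_int z"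
proof -
  obtain p d :: int where d: "d > 0" "coprime p d" and e: "2 * cos (2*pi/real n) = of_int p / of_int d"
    using Rats_cases'[OF q] by metis
  have "of_int (F p d n) = (of_int d :: real) ^ n * (2 * cos (real n * (2*pi/real n)))"
    using F_real[OF _ e] d by simp
  also have "real n * (2*pi/real n) = 2 * pi" using n by simp
  finally have "of_int (F p d n) = (of_int (2 * d ^ n) :: real)" by simp
  then have Fn: "F p d n = 2 * d ^ n" by (simp only: of_int_eq_iff)
  obtain m where m: "n = Suc m" using n by (cases n) auto
  have h1: "d dvd F p d n - p ^ n" using F_mod[of d p m] m by simp
  have h2: "d dvd F p d n" using Fn m by simp
  have "d dvd F p d n - (F p d n - p ^ n)" using h2 h1 by (rule dvd_diff)
  then have "d dvd p ^ n" by simp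
  moreover have "coprime (p ^ n) d" using d by simp
  ultimately have "\<bar>d\<bar> = 1" using coprime_common_divisor_int[of "p^n" d d] by auto
  then have "d = 1" using d by simp
  then show ?thesis using e by auto
qed



lemma cos_gt_m1: "0 \<le> x \<Longrightarrow> x < pi \<Longrightarrow> cos x > -1"
  using cos_monotone_0_pi[of x pi] by simp

lemma cos_lt_1: "0 < x \<Longrightarrow> x \<le> pi \<Longrightarrow> cos x < 1"
  using cos_monotone_0_pi[of 0 x] by simp

lemma cos0_n4:
  assumes "n \<ge> 3" "cos (2*pi/real n) = 0"
  shows "n = 4"
proof -
  have "2*pi/real n = pi/2"
  proof (rule cos_inj_pi)
    show "2*pi/real n \<le> pi" using assms(1) by (simp add: field_simps)
  qed (use assms in auto)
  then have "real n = 4" using assms(1) by (simp add: field_simps)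
  then show ?thesis by simp
qed

lemma cis_eq_1_int: "cis x = 1 \<Longrightarrow> \<exists>k::int. x = of_int k * 2 * pi"
proof -
  assume "cis x = 1"
  then have "cos x = 1" by (metis cis.sel(1) one_complex.sel(1))
  then show ?thesis using cos_one_2pi_int by auto
qed

lemma core:
  fixes t :: real and \<gamma> \<omega> :: complex and n a c :: nat
  assumes n3: "n \<ge> 3" and n4: "n \<noteq> 4" and ac: "a < n" "c < n" "a \<noteq> c"
    and g0: "\<gamma> \<noteq> 0"
    and om: "\<omega> = cis (2*pi/n)"
    and H: "\<And>j::nat. cis (t * (2 + 2*cos(2*pi*j/n))) * (\<omega>^(j*a) * (1 + \<omega>^j))
                 = \<gamma> * (\<omega>^(j*c) * (1 + \<omega>^j))"
  shows False
proof -
  define E where "E j = cis (t * (2 + 2*cos(2*pi*real j/n)))" for j :: nat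
  have npos: "real n > 0" using n3 by simp
  have omk: "\<omega>^k = cis (2*pi*k/n)" for k :: nat
    using om by (simp add: DeMoivre mult_ac)
  have om0: "\<omega>^k \<noteq> 0" for k using omk by simp
  define c1 where "c1 = cos (2*pi/n)"
  have ang: "0 < 2*pi/n" "2*pi/n < pi" using n3 by (auto simp: field_simps)
  have c1_gt: "c1 > -1" using cos_gt_m1 ang unfolding c1_def by auto
  have c1_lt: "c1 < 1" using cos_lt_1 ang unfolding c1_def by auto
  have c1_nz: "c1 \<noteq> 0" using cos0_n4 n3 n4 unfolding c1_def by auto
  have Reom: "Re \<omega> = c1" using om c1_def by simp
  have one_om: "1 + \<omega> \<noteq> 0"
  proof
    assume "1 + \<omega> = 0"
    then have "\<omega> = -1" by (simp add: add_eq_0_iff)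
    then show False using Reom c1_gt by simp
  qed
  define \<nu> where "\<nu> = \<omega>^(n-1)"
  have omn: "\<omega>^n = 1" using omk[of n] npos by simp
  have nuom: "\<nu> * \<omega> = 1" unfolding \<nu>_def using omn n3
    by (metis One_nat_def Suc_pred less_le_trans numeral_3_eq_3 power_Suc2 zero_less_Suc)
  have one_nu: "1 + \<nu> \<noteq> 0"
  proof
    assume "1 + \<nu> = 0"
    then have "\<nu> = -1" by (simp add: add_eq_0_iff)
    then have "\<omega> = -1" using nuom by (metis minus_mult_minus mult_1 mult_minus1)
    then show False using Reom c1_gt by simp
  qed
  have En1: "E (n-1) = E 1"
  proof -
    have "2*pi*real (n-1)/n = 2*pi - 2*pi/n" using n3 npos by (simp add: of_nat_diff field_simps)
    then have "cos (2*pi*real (n-1)/n) = cos (2*pi/n)" by simp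
    then show ?thesis unfolding E_def by simp
  qed
  have H': "E j * (\<omega>^(j*a) * (1 + \<omega>^j)) = \<gamma> * (\<omega>^(j*c) * (1 + \<omega>^j))" for j
    using H[of j] unfolding E_def .
  have e1: "E 1 * \<omega>^a = \<gamma> * \<omega>^c"
    using H'[of 1] one_om by (simp add: mult.assoc[symmetric])
  have e2: "E 1 * \<nu>^a = \<gamma> * \<nu>^c"
  proof -
    have "E (n-1) * (\<omega>^((n-1)*a) * (1 + \<omega>^(n-1))) = \<gamma> * (\<omega>^((n-1)*c) * (1 + \<omega>^(n-1)))"
      by (rule H')
    then have "E 1 * \<nu>^a * (1 + \<nu>) = \<gamma> * \<nu>^c * (1 + \<nu>)"
      unfolding En1 \<nu>_def by (simp add: power_mult mult.assoc)
    then show ?thesis using one_nu by simp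
  qed
  define A where "A = \<omega>^a"
  define C where "C = \<omega>^c"
  have nA: "\<nu>^a * A = 1" unfolding A_def by (metis nuom power_mult_distrib power_one)
  have nC: "\<nu>^c * C = 1" unfolding C_def by (metis nuom power_mult_distrib power_one)
  have E1nz: "E 1 \<noteq> 0" unfolding E_def by simp
  have e1': "E 1 * A = \<gamma> * C" using e1 unfolding A_def C_def .
  have e2': "E 1 * C = \<gamma> * A"
  proof -
    have "E 1 * C = E 1 * (\<nu>^a * A) * C" using nA by simp
    also have "\<dots> = (E 1 * \<nu>^a) * A * C" by (simp only: ac_simps)
    also have "\<dots> = (\<gamma> * \<nu>^c) * A * C" using e2 by simp
    also have "\<dots> = \<gamma> * (\<nu>^c * C) * A" by (simp only: ac_simps)
    also have "\<dots> = \<gamma> * A" using nC by simp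
    finally show ?thesis .
  qed
  have sq: "C * C = A * A"
  proof -
    have "\<gamma> * (C * C) = E 1 * A * C" using e1' by simp
    also have "\<dots> = \<gamma> * (A * A)" using e2' by (simp add: algebra_simps)
    finally show ?thesis using g0 by simp
  qed
  have CA: "C \<noteq> A"
  proof
    assume "C = A"
    then have "cis (2*pi*c/n) / cis (2*pi*a/n) = 1" unfolding A_def C_def omk by simp
    then have "cis (2*pi*c/n - 2*pi*a/n) = 1" by (simp add: cis_divide)
    then obtain k :: int where k: "2*pi*c/n - 2*pi*a/n = of_int k * 2 * pi" using cis_eq_1_int by blast
    then have "pi * (2 * real c) = pi * (2 * real a + 2 * of_int k * real n)" using npos by (simp add: field_simps)
    then have "2 * real c = 2 * real a + 2 * of_int k * real n" by (metis mult_cancel_left pi_neq_zero)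
    then have k': "real c - real a = of_int k * real n" by simp
    show False
    proof (cases "k = 0")
      case True then show False using k' ac by simp
    next
      case False
      then have "k \<ge> 1 \<or> k \<le> -1" by auto
      then show False
      proof
        assume "k \<ge> 1"
        then have "of_int k * real n \<ge> real n" using npos by (simp add: mult_right_mono[of 1 "of_int k" "real n", simplified])
        then show False using k' ac by linarith
      next
        assume "k \<le> -1"
        then have "of_int k * real n \<le> - real n"
          using mult_right_mono[of "of_int k" "-1" "real n"] npos by simp
        then show False using k' ac by linarith
      qed
    qed
  qed
  have CmA: "C = - A"
  proof -
    have "(C - A) * (C + A) = 0" using sq by (simp add: algebra_simps)
    then show ?thesis using CA by (simp add: add_eq_0_iff)
  qed
  have key: "E j = \<gamma> * (-1)^j" if "1 + \<omega>^j \<noteq> 0" for j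
  proof -
    have "\<omega>^(j*c) = (\<omega>^c)^j" by (simp only: power_mult mult.commute[of j])
    also have "\<dots> = (- A)^j" using CmA unfolding C_def by simp
    also have "\<dots> = (-1)^j * A^j" by (rule power_minus)
    also have "A^j = \<omega>^(j*a)" unfolding A_def by (simp only: power_mult mult.commute[of j])
    finally have p: "\<omega>^(j*c) = (-1)^j * \<omega>^(j*a)" .
    have "E j * (\<omega>^(j*a) * (1 + \<omega>^j)) = \<gamma> * (\<omega>^(j*c) * (1 + \<omega>^j))" by (rule H')
    also have "\<dots> = (\<gamma> * (-1)^j) * (\<omega>^(j*a) * (1 + \<omega>^j))" unfolding p by (simp only: ac_simps)
    finally have "E j * (\<omega>^(j*a) * (1 + \<omega>^j)) = (\<gamma> * (-1)^j) * (\<omega>^(j*a) * (1 + \<omega>^j))" .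
    moreover have "\<omega>^(j*a) * (1 + \<omega>^j) \<noteq> 0" using that om0[of "j*a"] by (simp only: mult_eq_0_iff) simp
    ultimately show ?thesis by (simp only: mult_cancel_right) simp
  qed
  have E0: "E 0 = \<gamma>" using key[of 0] by simp
  have E1: "E 1 = - \<gamma>" using key[of 1] one_om by simp
  define c2 where "c2 = cos (2*pi*2/n)"
  have c2: "c2 = 2 * c1^2 - 1"
  proof -
    have "2*pi*2/n = 2 * (2*pi/n)" by simp
    then show ?thesis unfolding c2_def c1_def by (simp only: cos_double_cos)
  qed
  have one_om2: "1 + \<omega>^2 \<noteq> 0"
  proof
    assume "1 + \<omega>^2 = 0"
    then have "\<omega>^2 = -1" by (simp add: add_eq_0_iff)
    then have "Re (\<omega>^2) = -1" by simp
    then have "c2 = -1" unfolding c2_def using omk[of 2] by simp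
    then show False using c2 c1_nz by simp
  qed
  have E2: "E 2 = \<gamma>" using key[of 2] one_om2 by simp
  define th1 where "th1 = t * (2 - 2*c1)"
  define th2 where "th2 = t * (2 - 2*c2)"
  have "cis (t*4) = - cis (t * (2 + 2*c1))" using E0 E1 unfolding E_def c1_def by simp
  then have "cis (t*4) / cis (t * (2 + 2*c1)) = -1" by (simp add: divide_eq_eq)
  then have "cis th1 = -1" unfolding th1_def cis_divide by (simp add: algebra_simps)
  then have "cis (th1 + pi) = 1" by (simp add: cis_mult[symmetric])
  then obtain m :: int where m: "th1 + pi = of_int m * 2 * pi" using cis_eq_1_int by blast
  have "cis (t*4) = cis (t * (2 + 2*c2))" using E0 E2 unfolding E_def c2_def by simp
  then have "cis (t*4) / cis (t * (2 + 2*c2)) = 1" by simp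
  then have "cis th2 = 1" unfolding th2_def cis_divide by (simp add: algebra_simps)
  then obtain k :: int where k: "th2 = of_int k * 2 * pi" using cis_eq_1_int by blast
  have "th2 = th1 * (2 + 2*c1)" unfolding th1_def th2_def c2 by (simp add: algebra_simps power2_eq_square)
  then have "of_int k * 2 * pi = (of_int m * 2 * pi - pi) * (2 + 2*c1)" using m k by simp
  then have "of_int k * 2 * pi = pi * ((2 * of_int m - 1) * (2 + 2*c1))" by (simp add: algebra_simps)
  then have rel: "2 * of_int k = (2 * of_int m - 1) * (2 + 2*c1)" by simp
  have odd_nz: "(2 * of_int m - 1 :: real) \<noteq> 0"
  proof
    assume "(2 * of_int m - 1 :: real) = 0"
    then have "(of_int (2 * m - 1) :: real) = of_int 0" by simp
    then have "2 * m - 1 = 0" by (simp only: of_int_eq_iff)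
    then show False by presburger
  qed
  have "2 * c1 = 2 * of_int k / (2 * of_int m - 1) - 2" using rel odd_nz by (simp add: field_simps)
  then have "2 * c1 \<in> \<rat>" by simp
  then obtain z :: int where z: "2 * c1 = of_int z" using two_cos_int[of n] n3 unfolding c1_def by auto
  have "z = 1 \<or> z = -1"
  proof -
    have "of_int z > (-2::real)" "of_int z < (2::real)" "of_int z \<noteq> (0::real)" using z c1_gt c1_lt c1_nz by auto
    then have "z > -2" "z < 2" "z \<noteq> 0" by linarith+
    then show ?thesis by linarith
  qed
  moreover have "(of_int (2 * k) :: real) = of_int ((2 * m - 1) * (2 + z))" using rel z by simp
  then have "2 * k = (2 * m - 1) * (2 + z)" by (simp only: of_int_eq_iff)
  ultimately show False by presburger
qed



lemma sum4: "(\<Sum>w<(4::nat). f w) = f 0 + f 1 + f 2 + f 3"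
  by (simp add: eval_nat_numeral)

lemma all4: "(\<forall>v<(4::nat). P v) \<longleftrightarrow> P 0 \<and> P 1 \<and> P 2 \<and> P 3"
  by (auto simp: eval_nat_numeral less_Suc_eq)

lemma L4: "v < 4 \<Longrightarrow> w < 4 \<Longrightarrow> signless_laplacian 4 (cycle_adj 4) v w =
    (if v = w then 2 else 0) + (if cycle_adj 4 v w then 1 else 0)"
  by (rule cycle_L) auto

lemma std_sum:
  assumes "c < n"
  shows "(\<Sum>v<n. f v * std_basis c v) = f c"
proof -
  have "(\<Sum>v<n. f v * std_basis c v) = (\<Sum>v<n. if v = c then f c else 0)"
    by (intro sum.cong) (auto simp: std_basis_def)
  then show ?thesis using assms by simp
qed

lemma forward4: "plus_PST 4 (cycle_adj 4) 0 1 2 3"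
proof -
  define t :: real where "t = pi / 2"
  define M where "M = (\<lambda>i j. \<i> * of_real t * signless_laplacian 4 (cycle_adj 4) i j)"
  define g :: "nat \<Rightarrow> complex" where "g w = (if w < 2 then 1 else -1)" for w
  have eig1: "\<forall>v<4. (\<Sum>w<4. M v w * 1) = (\<i> * of_real t * 4) * 1"
    unfolding all4 sum4 M_def by (simp add: L4 cycle_adj_def algebra_simps)
  have eig2: "\<forall>v<4. (\<Sum>w<4. M v w * g w) = (\<i> * of_real t * 2) * g v"
    unfolding all4 sum4 M_def g_def by (simp add: L4 cycle_adj_def algebra_simps)
  have x1: "exp (\<i> * of_real t * 4) = 1" unfolding t_def
  proof -
    have "\<i> * complex_of_real (pi / 2) * 4 = 2 * of_real pi * \<i>" by (simp add: field_simps)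
    then show "exp (\<i> * complex_of_real (pi / 2) * 4) = 1" by (simp only: exp_two_pi_i)
  qed
  have x2: "exp (\<i> * of_real t * 2) = -1" unfolding t_def
  proof -
    have "\<i> * complex_of_real (pi / 2) * 2 = of_real pi * \<i>" by (simp add: field_simps)
    then show "exp (\<i> * complex_of_real (pi / 2) * 2) = -1" by (simp only: exp_pi_i)
  qed
  have "\<forall>v<4. mat_vec 4 (mat_exp 4 M) (\<lambda>w. std_basis 0 w + std_basis 1 w) v
          = 1 * (std_basis 2 v + std_basis 3 v)"
  proof (intro allI impI)
    fix v :: nat assume v: "v < 4"
    have "mat_vec 4 (mat_exp 4 M) (\<lambda>w. std_basis 0 w + std_basis 1 w) v
        = (\<Sum>w<4. mat_exp 4 M v w * ((1 + g w) / 2))"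
      unfolding mat_vec_def sum4 by (simp add: std_basis_def g_def)
    also have "\<dots> = ((\<Sum>w<4. mat_exp 4 M v w * 1) + (\<Sum>w<4. mat_exp 4 M v w * g w)) / 2"
      by (simp add: sum.distrib[symmetric] sum_divide_distrib[symmetric] algebra_simps)
    also have "\<dots> = (exp (\<i> * of_real t * 4) * 1 + exp (\<i> * of_real t * 2) * g v) / 2"
      using mat_exp_reig[OF eig1 v] mat_exp_reig[OF eig2 v] by simp
    also have "\<dots> = 1 * (std_basis 2 v + std_basis 3 v)"
      unfolding x1 x2 using v unfolding all4[where P="\<lambda>v. v < 4", simplified] 
      by (cases "v = 0 \<or> v = 1 \<or> v = 2 \<or> v = 3") (auto simp: g_def std_basis_def)
    finally show "mat_vec 4 (mat_exp 4 M) (\<lambda>w. std_basis 0 w + std_basis 1 w) v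
          = 1 * (std_basis 2 v + std_basis 3 v)" .
  qed
  then show ?thesis unfolding plus_PST_def M_def
    by (intro exI[of _ t] exI[of _ 1]) (simp add: t_def)
qed



lemma norm_1_cis: "(cmod (1 + cis x))^2 = 2 + 2 * cos x"
proof -
  have "(cmod (1 + cis x))^2 = (1 + cos x)^2 + (sin x)^2" by (simp add: cmod_power2)
  also have "\<dots> = 2 + 2 * cos x" using sin_cos_squared_add[of x] by (simp add: power2_eq_square algebra_simps)
  finally show ?thesis .
qed

lemma cos_delta_aux:
  fixes n d :: nat
  assumes "n \<ge> 3" "1 \<le> d" "2 * d \<le> n" "cos (2*pi*d/n) = cos (2*pi/n)"
  shows "d = 1"
proof -
  have npos: "real n > 0" using assms by simp
  have "2*pi*d/n = 2*pi/n"
  proof (rule cos_inj_pi)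
    have "real (2*d) \<le> real n" using assms(3) by (simp only: of_nat_le_iff)
    then have "2 * real d \<le> real n" by simp
    then have "2*pi*d \<le> pi * n" using pi_gt_zero by (metis mult.assoc mult.commute mult_left_mono pi_ge_zero)
    then show "2*pi*d/n \<le> pi" using npos by (simp add: field_simps)
    show "2*pi/n \<le> pi" using assms(1) npos by (simp add: field_simps)
  qed (use assms npos in auto)
  then have "real d = 1" using npos by (simp add: field_simps)
  then show ?thesis by simp
qed

lemma cos_delta:
  fixes n d :: nat
  assumes n3: "n \<ge> 3" and d: "1 \<le> d" "d \<le> n - 1"
  shows "cos (2*pi*d/n) = cos (2*pi/n) \<longleftrightarrow> d = 1 \<or> d = n - 1"
proof -
  have npos: "real n > 0" using n3 by simp
  have sym: "cos (2*pi*real (n - e)/n) = cos (2*pi*e/n)" if "e \<le> n" for e :: nat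
  proof -
    have "2*pi*real (n - e)/n = 2*pi - 2*pi*e/n" using that npos by (simp add: of_nat_diff field_simps)
    then show ?thesis by simp
  qed
  show ?thesis
  proof
    assume h: "cos (2*pi*d/n) = cos (2*pi/n)"
    show "d = 1 \<or> d = n - 1"
    proof (cases "2 * d \<le> n")
      case True
      then show ?thesis using cos_delta_aux[OF n3 d(1) True h] by simp
    next
      case False
      have "cos (2*pi*real (n - d)/n) = cos (2*pi/n)" using sym[of d] d h by simp
      then have "n - d = 1" using cos_delta_aux[OF n3, of "n - d"] False d by simp
      then show ?thesis using d by arith
    qed
  next
    assume "d = 1 \<or> d = n - 1"
    then show "cos (2*pi*d/n) = cos (2*pi/n)"
    proof
      assume "d = n - 1"
      then show ?thesis using sym[of 1] n3 by simp
    qed simp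
  qed
qed

lemma edge_norm_lt:
  fixes \<omega> :: complex
  assumes n3: "n \<ge> 3" and om: "\<omega> = cis (2*pi/n)" and xy: "x < y" "y < n"
  shows "cycle_adj n x y \<longleftrightarrow> cmod (\<omega>^x + \<omega>^y) = cmod (1 + \<omega>)"
proof -
  define d where "d = y - x"
  have npos: "real n > 0" using n3 by simp
  have d1: "1 \<le> d" "d \<le> n - 1" using xy unfolding d_def by auto
  have omk: "\<omega>^k = cis (2*pi*k/n)" for k :: nat
    using om by (simp add: DeMoivre mult_ac)
  have "\<omega>^y = \<omega>^x * \<omega>^d" unfolding d_def using xy by (simp add: power_add[symmetric])
  then have "\<omega>^x + \<omega>^y = \<omega>^x * (1 + \<omega>^d)" by (simp add: distrib_left)
  then have "cmod (\<omega>^x + \<omega>^y) = cmod (\<omega>^x) * cmod (1 + \<omega>^d)" by (simp add: norm_mult)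
  moreover have "cmod (\<omega>^x) = 1" by (simp add: omk)
  ultimately have "cmod (\<omega>^x + \<omega>^y) = cmod (1 + \<omega>^d)" by simp
  then have "cmod (\<omega>^x + \<omega>^y) = cmod (1 + \<omega>) \<longleftrightarrow> (cmod (1 + cis (2*pi*d/n)))^2 = (cmod (1 + cis (2*pi/n)))^2"
    using omk[of d] om by (simp add: power2_eq_iff_nonneg)
  also have "\<dots> \<longleftrightarrow> cos (2*pi*d/n) = cos (2*pi/n)" by (simp add: norm_1_cis)
  also have "\<dots> \<longleftrightarrow> d = 1 \<or> d = n - 1" by (rule cos_delta[OF n3 d1])
  also have "\<dots> \<longleftrightarrow> cycle_adj n x y"
  proof (cases "y + 1 = n")
    case True
    then have "(y+1) mod n = 0" by simp
    moreover have "(x+1) mod n = x + 1" using xy by simp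
    ultimately show ?thesis unfolding cycle_adj_def d_def using xy True by auto
  next
    case False
    then have "(y+1) mod n = y + 1" using xy by simp
    moreover have "(x+1) mod n = x + 1" using xy by simp
    ultimately show ?thesis unfolding cycle_adj_def d_def using xy False by auto
  qed
  finally show ?thesis by simp
qed

lemma edge_norm:
  fixes \<omega> :: complex
  assumes n3: "n \<ge> 3" and om: "\<omega> = cis (2*pi/n)" and xy: "x < n" "y < n" "x \<noteq> y"
  shows "cycle_adj n x y \<longleftrightarrow> cmod (\<omega>^x + \<omega>^y) = cmod (1 + \<omega>)"
proof (cases "x < y")
  case True
  show ?thesis by (rule edge_norm_lt[OF n3 om True xy(2)])
next
  case False
  then have "y < x" using xy by simp
  then have "cycle_adj n y x \<longleftrightarrow> cmod (\<omega>^y + \<omega>^x) = cmod (1 + \<omega>)"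
    by (rule edge_norm_lt[OF n3 om _ xy(1)])
  then show ?thesis by (simp add: cycle_adj_sym[of n x y] add.commute)
qed

lemma orient:
  fixes \<omega> :: complex
  assumes omn: "\<omega>^n = 1" and e: "cycle_adj n a b"
  obtains a' where "a' < n" "{a,b} = {a', (a'+1) mod n}"
    "\<And>j. \<omega>^(j*a) + \<omega>^(j*b) = \<omega>^(j*a') * (1 + \<omega>^j)"
proof -
  have step: "\<omega>^(j*((u+1) mod n)) = \<omega>^(j*u) * \<omega>^j" for u j
  proof -
    have "\<omega>^(j*((u+1) mod n)) = \<omega>^(j*(u+1))" by (rule pow_mod_root[OF omn])
    also have "j*(u+1) = j*u + j" by (simp add: distrib_left)
    finally show ?thesis by (simp only: power_add)
  qed
  from e have ab: "a < n" "b < n" and o: "b = (a+1) mod n \<or> a = (b+1) mod n" unfolding cycle_adj_def by auto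
  from o show ?thesis
  proof
    assume h: "b = (a+1) mod n"
    show ?thesis
    proof (rule that[of a])
      show "\<omega>^(j*a) + \<omega>^(j*b) = \<omega>^(j*a) * (1 + \<omega>^j)" for j
        unfolding h step by (simp add: distrib_left)
    qed (use ab h in auto)
  next
    assume h: "a = (b+1) mod n"
    show ?thesis
    proof (rule that[of b])
      show "\<omega>^(j*a) + \<omega>^(j*b) = \<omega>^(j*b) * (1 + \<omega>^j)" for j
        unfolding h step by (simp add: distrib_left)
    qed (use ab h in auto)
  qed
qed

lemma fourier:
  fixes t :: real and \<gamma> \<omega> :: complex
  assumes n3: "n \<ge> 3" and om: "\<omega> = cis (2*pi/n)" and abcd: "a < n" "b < n" "c < n" "d < n"
  and P: "\<forall>v<n. mat_vec n (mat_exp n (\<lambda>i j. \<i> * of_real t * signless_laplacian n (cycle_adj n) i j))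
                 (\<lambda>w. std_basis a w + std_basis b w) v = \<gamma> * (std_basis c v + std_basis d v)"
  shows "cis (t * (2 + 2*cos(2*pi*j/n))) * (\<omega>^(j*a) + \<omega>^(j*b)) = \<gamma> * (\<omega>^(j*c) + \<omega>^(j*d))"
proof -
  define M where "M = (\<lambda>i j. \<i> * of_real t * signless_laplacian n (cycle_adj n) i j)"
  define U where "U = mat_exp n M"
  define \<psi> where "\<psi> v = \<omega>^(j*v)" for v
  define r where "r = 2 + 2*cos(2*pi*j/n)"
  define x where "x = (\<lambda>w. std_basis a w + std_basis b w)"
  have npos: "real n > 0" using n3 by simp
  have omk: "\<omega>^k = cis (2*pi*k/n)" for k :: nat
    using om by (simp add: DeMoivre mult_ac)
  have omn: "\<omega>^n = 1" using omk[of n] npos by simp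
  have mu: "2 + \<omega>^j + \<omega>^(j*(n-1)) = complex_of_real r"
  proof -
    have "\<omega>^j * \<omega>^(j*(n-1)) = \<omega>^(j*n)"
    proof -
      have "j + j*(n-1) = j*n" using n3 by (cases n) (auto simp: algebra_simps)
      then show ?thesis by (metis power_add)
    qed
    also have "\<dots> = 1" by (simp add: power_mult[of \<omega> n j, simplified mult.commute[of n j]] omn)
    finally have "inverse (\<omega>^j) = \<omega>^(j*(n-1))" by (rule inverse_unique)
    then have "\<omega>^(j*(n-1)) = cis (- (2*pi*j/n))" using omk[of j] by simp
    then show ?thesis unfolding r_def using omk[of j] by (simp add: complex_eq_iff)
  qed
  have leig: "\<forall>w<n. (\<Sum>v<n. \<psi> v * M v w) = (\<i> * of_real t * of_real r) * \<psi> w"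
  proof (intro allI impI)
    fix w assume w: "w < n"
    have "(\<Sum>v<n. \<psi> v * M v w) = \<i> * of_real t * (\<Sum>v<n. \<omega>^(j*v) * signless_laplacian n (cycle_adj n) v w)"
      unfolding M_def \<psi>_def by (simp add: sum_distrib_left ac_simps)
    also have "\<dots> = \<i> * of_real t * ((2 + \<omega>^j + \<omega>^(j*(n-1))) * \<omega>^(j*w))"
      using cycle_leig[OF n3 omn w] by simp
    finally show "(\<Sum>v<n. \<psi> v * M v w) = (\<i> * of_real t * of_real r) * \<psi> w"
      unfolding mu \<psi>_def by (simp add: ac_simps)
  qed
  have Ueig: "(\<Sum>v<n. \<psi> v * U v w) = exp (\<i> * of_real t * of_real r) * \<psi> w" if "w < n" for w
    unfolding U_def by (rule mat_exp_leig[OF leig that])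
  have ex: "exp (\<i> * of_real t * of_real r) = cis (t * r)" by (simp add: cis_conv_exp mult.assoc)
  have xsum: "(\<Sum>w<n. \<psi> w * (std_basis p w + std_basis q w)) = \<psi> p + \<psi> q" if "p < n" "q < n" for p q
    by (simp add: distrib_left sum.distrib std_sum that)
  have "(\<Sum>v<n. \<psi> v * mat_vec n U x v) = (\<Sum>v<n. \<gamma> * (\<psi> v * (std_basis c v + std_basis d v)))"
    using P unfolding U_def M_def x_def by (intro sum.cong) (auto simp: ac_simps)
  also have "\<dots> = \<gamma> * (\<psi> c + \<psi> d)" by (simp add: sum_distrib_left[symmetric] xsum abcd)
  finally have S1: "(\<Sum>v<n. \<psi> v * mat_vec n U x v) = \<gamma> * (\<psi> c + \<psi> d)" .
  have "(\<Sum>v<n. \<psi> v * mat_vec n U x v) = (\<Sum>v<n. \<Sum>w<n. \<psi> v * U v w * x w)"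
    unfolding mat_vec_def by (simp add: sum_distrib_left ac_simps)
  also have "\<dots> = (\<Sum>w<n. (\<Sum>v<n. \<psi> v * U v w) * x w)"
    by (subst sum.swap) (simp add: sum_distrib_right)
  also have "\<dots> = (\<Sum>w<n. exp (\<i> * of_real t * of_real r) * (\<psi> w * x w))"
    by (intro sum.cong refl) (simp add: Ueig)
  also have "\<dots> = exp (\<i> * of_real t * of_real r) * (\<psi> a + \<psi> b)"
    unfolding x_def by (simp add: sum_distrib_left[symmetric] xsum abcd)
  finally have S2: "(\<Sum>v<n. \<psi> v * mat_vec n U x v) = cis (t * r) * (\<psi> a + \<psi> b)" unfolding ex .
  show ?thesis using S1 S2 unfolding \<psi>_def r_def by simp
qed



theorem mainTheorem18:
  fixes n :: nat
  assumes "n \<ge> 3"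
  shows "(\<exists>a b c d. a < n \<and> b < n \<and> c < n \<and> d < n \<and> a \<noteq> b \<and> c \<noteq> d \<and>
            {a, b} \<noteq> {c, d} \<and> (cycle_adj n a b \<or> cycle_adj n c d) \<and>
            plus_PST n (cycle_adj n) a b c d)
         \<longleftrightarrow> n = 4"
proof
  assume "\<exists>a b c d. a < n \<and> b < n \<and> c < n \<and> d < n \<and> a \<noteq> b \<and> c \<noteq> d \<and>
            {a, b} \<noteq> {c, d} \<and> (cycle_adj n a b \<or> cycle_adj n c d) \<and>
            plus_PST n (cycle_adj n) a b c d"
  then obtain a b c d where abcd: "a < n" "b < n" "c < n" "d < n" "a \<noteq> b" "c \<noteq> d"
    and ne: "{a, b} \<noteq> {c, d}" and edge: "cycle_adj n a b \<or> cycle_adj n c d"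
    and pst: "plus_PST n (cycle_adj n) a b c d" by blast
  from pst obtain t :: real and \<gamma> :: complex where g1: "cmod \<gamma> = 1"
    and P: "\<forall>v<n. mat_vec n (mat_exp n (\<lambda>i j. \<i> * of_real t * signless_laplacian n (cycle_adj n) i j))
                   (\<lambda>w. std_basis a w + std_basis b w) v = \<gamma> * (std_basis c v + std_basis d v)"
    unfolding plus_PST_def by blast
  show "n = 4"
  proof (rule ccontr)
    assume n4: "n \<noteq> 4"
    define \<omega> where "\<omega> = cis (2*pi/n)"
    have npos: "real n > 0" using assms by simp
    have omn: "\<omega>^n = 1" unfolding \<omega>_def using npos by (simp add: DeMoivre)
    have H0: "cis (t * (2 + 2*cos(2*pi*j/n))) * (\<omega>^(j*a) + \<omega>^(j*b)) = \<gamma> * (\<omega>^(j*c) + \<omega>^(j*d))" for j :: nat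
      by (rule fourier[OF assms \<omega>_def abcd(1-4) P])
    have "cmod (cis (t * (2 + 2*cos(2*pi*real (1::nat)/n))) * (\<omega>^(1*a) + \<omega>^(1*b))) = cmod (\<gamma> * (\<omega>^(1*c) + \<omega>^(1*d)))"
      using H0[of 1] by (simp only:)
    then have nrm: "cmod (\<omega>^a + \<omega>^b) = cmod (\<omega>^c + \<omega>^d)" using g1 by (simp add: norm_mult)
    note i1 = edge_norm[OF assms \<omega>_def abcd(1,2,5)]
    note i2 = edge_norm[OF assms \<omega>_def abcd(3,4,6)]
    have eab: "cycle_adj n a b" and ecd: "cycle_adj n c d"
      using edge unfolding i1 i2 nrm by blast+
    obtain a' where a': "a' < n" "{a,b} = {a', (a'+1) mod n}"
      "\<And>j. \<omega>^(j*a) + \<omega>^(j*b) = \<omega>^(j*a') * (1 + \<omega>^j)" using orient[OF omn eab] by blast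
    obtain c' where c': "c' < n" "{c,d} = {c', (c'+1) mod n}"
      "\<And>j. \<omega>^(j*c) + \<omega>^(j*d) = \<omega>^(j*c') * (1 + \<omega>^j)" using orient[OF omn ecd] by blast
    have ac: "a' \<noteq> c'"
    proof
      assume "a' = c'"
      then have "{a,b} = {c,d}" using a'(2) c'(2) by simp
      then show False using ne by simp
    qed
    have g0: "\<gamma> \<noteq> 0" using g1 by auto
    have H: "cis (t * (2 + 2*cos(2*pi*j/n))) * (\<omega>^(j*a') * (1 + \<omega>^j)) = \<gamma> * (\<omega>^(j*c') * (1 + \<omega>^j))" for j :: nat
      using H0[of j] unfolding a'(3) c'(3) .
    show False by (rule core[OF assms n4 a'(1) c'(1) ac g0 \<omega>_def H])
  qed
next
  assume n4: "n = 4"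
  have W: "(0::nat) < 4 \<and> (1::nat) < 4 \<and> (2::nat) < 4 \<and> (3::nat) < 4 \<and> (0::nat) \<noteq> 1 \<and> (2::nat) \<noteq> 3 \<and>
            {0::nat, 1} \<noteq> {2, 3} \<and> (cycle_adj 4 0 1 \<or> cycle_adj 4 2 3) \<and>
            plus_PST 4 (cycle_adj 4) 0 1 2 3"
  proof (intro conjI)
    show "{0::nat, 1} \<noteq> {2, 3}"
    proof
      assume "{0::nat, 1} = {2, 3}"
      then have "(0::nat) \<in> {2, 3}" by blast
      then show False by simp
    qed
    show "cycle_adj 4 0 1 \<or> cycle_adj 4 2 3" by (simp add: cycle_adj_def)
    show "plus_PST 4 (cycle_adj 4) 0 1 2 3" by (rule forward4)
  qed simp_all
  show "\<exists>a b c d. a < n \<and> b < n \<and> c < n \<and> d < n \<and> a \<noteq> b \<and> c \<noteq> d \<and>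
            {a, b} \<noteq> {c, d} \<and> (cycle_adj n a b \<or> cycle_adj n c d) \<and>
            plus_PST n (cycle_adj n) a b c d" unfolding n4
    by (rule exI[of _ 0], rule exI[of _ 1], rule exI[of _ 2], rule exI[of _ 3]) (rule W)
qed


end
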